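(* Let $d\ge 1$ and $n\ge 1$ be integers. Let $v_1,\ldots,v_n\in\mathbb{R}^d$ be non-zero vectors with $\|v_i\|_2\le 1$ for all $i$, let $\varepsilon_1,\ldots,\varepsilon_n$ be independent Rademacher random variables, and set $S_n=v_1\varepsilon_1+\cdots+v_n\varepsilon_n$. Let $R_n=\varepsilon_1+\cdots+\varepsilon_n$. Then for every non-zero $x\in\mathbb{R}^d$, $$\mathbb{P}(S_n=x)\le \mathbb{P}(R_n=k+\delta_{n,k})=\binom{n}{\lceil \frac{n+k}{2}\rceil}\Big/2^n,$$ where $k=\lceil \|x\|_2\rceil$ is the upper integer part of $\|x\|_2$.
   Context: A Rademacher random variable $\varepsilon$ satisfies $\mathbb{P}(\varepsilon=1)=\mathbb{P}(\varepsilon=-1)=\tfrac12$. For integers $n,k$, $\delta_{n,k}$ is defined to be $0$ if $n+k$ is even and $1$ otherwise. *)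

theory Defs
  imports "HOL-Probability.Probability"
begin

text \<open>Joint law of n independent Rademacher variables \<open>\<epsilon>_0,...,\<epsilon>_(n-1)\<close>:
  the uniform distribution on sign sequences in \<open>{-1,1}^n\<close>.\<close>
definition rademacher_seqs :: "nat \<Rightarrow> (nat \<Rightarrow> real) set" where
  "rademacher_seqs n = {..<n} \<rightarrow>\<^sub>E {-1, 1}"

definition rademacher_pmf :: "nat \<Rightarrow> (nat \<Rightarrow> real) pmf" where
  "rademacher_pmf n = pmf_of_set (rademacher_seqs n)"

definition delta_nk :: "nat \<Rightarrow> int \<Rightarrow> int" where
  "delta_nk n k = (if even (int n + k) then 0 else 1)"

end

theory Submission
  imports Defs
begin


fun st :: "nat list \<Rightarrow> nat set \<Rightarrow> nat \<times> nat" where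
  "st [] A = (0, 0)"
| "st (j # ks) A = (case st ks A of (u, p) \<Rightarrow>
     if j \<in> A then (if p = u then (Suc u, Suc u) else (u - 1, p)) else (Suc u, p))"

fun cid :: "nat list \<Rightarrow> nat set \<Rightarrow> bool list" where
  "cid [] A = []"
| "cid (j # ks) A = (j \<in> A \<and> snd (st ks A) < fst (st ks A)) # cid ks A"

definition G :: "(nat \<Rightarrow> real) \<Rightarrow> nat list \<Rightarrow> nat set \<Rightarrow> real" where
  "G b ks A = sum_list (map (\<lambda>i. if i \<in> A then b i else - b i) ks)"

lemma st_le: "snd (st ks A) \<le> fst (st ks A)"
  by (induction ks) (auto split: prod.splits)

lemma st_cong: "(\<forall>i\<in>set ks. i \<in> A \<longleftrightarrow> i \<in> B) \<Longrightarrow> st ks A = st ks B \<and> cid ks A = cid ks B"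
  by (induction ks) (auto split: prod.splits)

lemma st_card: "distinct ks \<Longrightarrow>
  2 * card (A \<inter> set ks) + fst (st ks A) = length ks + 2 * snd (st ks A)"
proof (induction ks)
  case Nil then show ?case by simp
next
  case (Cons j ks)
  obtain u p where up: "st ks A = (u, p)" by force
  have pu: "p \<le> u" using st_le[of ks A] up by simp
  have fin: "finite (A \<inter> set ks)" by simp
  show ?case
  proof (cases "j \<in> A")
    case True
    then have "A \<inter> set (j # ks) = insert j (A \<inter> set ks)" by auto
    moreover have "j \<notin> A \<inter> set ks" using Cons.prems by auto
    ultimately have c: "card (A \<inter> set (j # ks)) = Suc (card (A \<inter> set ks))" using fin by simp
    show ?thesis using Cons up pu True c by auto
  next
    case False
    then have "A \<inter> set (j # ks) = A \<inter> set ks" by auto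
    then show ?thesis using Cons up False by auto
  qed
qed

lemma st_chain: "cid ks A = cid ks B \<Longrightarrow> fst (st ks A) = fst (st ks B) \<and>
   (snd (st ks A) \<le> snd (st ks B) \<longrightarrow> A \<inter> set ks \<subseteq> B \<inter> set ks)"
proof (induction ks)
  case Nil then show ?case by simp
next
  case (Cons j ks)
  obtain u p where up: "st ks A = (u, p)" by force
  obtain u' p' where up': "st ks B = (u', p')" by force
  have pu: "p \<le> u" using st_le[of ks A] up by simp
  have pu': "p' \<le> u'" using st_le[of ks B] up' by simp
  have eq: "cid ks A = cid ks B" and fl: "(j \<in> A \<and> p < u) = (j \<in> B \<and> p' < u')"
    using Cons.prems up up' by auto
  then have uu: "u = u'" and mono: "p \<le> p' \<Longrightarrow> A \<inter> set ks \<subseteq> B \<inter> set ks"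
    using Cons.IH up up' by auto
  show ?case
    using fl uu mono pu pu' up up' by (auto split: if_splits)
qed

lemma st_exists: "distinct ks \<Longrightarrow> q \<le> fst (st ks A) \<Longrightarrow>
   \<exists>B. B \<subseteq> set ks \<and> cid ks B = cid ks A \<and> snd (st ks B) = q"
proof (induction ks arbitrary: q)
  case Nil then show ?case by simp
next
  case (Cons j ks)
  obtain u p where up: "st ks A = (u, p)" by force
  have pu: "p \<le> u" using st_le[of ks A] up by simp
  have jn: "j \<notin> set ks" using Cons.prems by simp
  have ins: "st ks (insert j X) = st ks X \<and> cid ks (insert j X) = cid ks X" for X
    using st_cong[of ks "insert j X" X] jn by auto
  show ?case
  proof (cases "j \<in> A \<and> p < u")
    case True
    then have qu: "q < u" using Cons.prems up by auto
    obtain X where X: "X \<subseteq> set ks" "cid ks X = cid ks A" "snd (st ks X) = q"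
      using Cons.IH[of q] Cons.prems qu up by auto
    have "fst (st ks X) = u" using st_chain[OF X(2)] up by simp
    then have sx: "st ks X = (u, q)" using X(3) by (metis prod.collapse)
    show ?thesis
      by (rule exI[of _ "insert j X"]) (use X sx ins True up qu in auto)
  next
    case False
    then have qu: "q \<le> Suc u" using Cons.prems up by (auto split: if_splits)
    show ?thesis
    proof (cases "q \<le> u")
      case True
      obtain X where X: "X \<subseteq> set ks" "cid ks X = cid ks A" "snd (st ks X) = q"
        using Cons.IH[of q] Cons.prems True up by auto
      have "fst (st ks X) = u" using st_chain[OF X(2)] up by simp
      then have sx: "st ks X = (u, q)" using X(3) by (metis prod.collapse)
      have "j \<notin> X" using X(1) jn by auto
      then show ?thesis
        by (intro exI[of _ X]) (use X sx False up True in \<open>auto split: if_splits\<close>)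
    next
      case c2: False
      then have qe: "q = Suc u" using qu by simp
      obtain X where X: "X \<subseteq> set ks" "cid ks X = cid ks A" "snd (st ks X) = u"
        using Cons.IH[of u] Cons.prems up by auto
      have "fst (st ks X) = u" using st_chain[OF X(2)] up by simp
      then have sx: "st ks X = (u, u)" using X(3) by (metis prod.collapse)
      show ?thesis
        by (rule exI[of _ "insert j X"]) (use X sx ins False up qe in \<open>auto split: if_splits\<close>)
    qed
  qed
qed

lemma G_Cons: "G b (j # ks) A = (if j \<in> A then b j else - b j) + G b ks A"
  by (simp add: G_def)

lemma st_inv:
  assumes "sorted_wrt (\<lambda>i j. b i \<le> b j) ks" "\<forall>i\<in>set ks. 0 \<le> b i \<and> b i \<le> 1"
    "0 \<le> c" "\<forall>i\<in>set ks. c \<le> b i"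
  shows "G b ks A + (real (fst (st ks A)) - real (snd (st ks A))) * c \<le> real (snd (st ks A))"
  using assms
proof (induction ks arbitrary: c)
  case Nil then show ?case by (simp add: G_def)
next
  case (Cons j ks)
  obtain u p where up: "st ks A = (u, p)" by force
  have pu: "p \<le> u" using st_le[of ks A] up by simp
  have bj: "0 \<le> b j" "b j \<le> 1" "c \<le> b j" using Cons.prems by auto
  have IH: "G b ks A + (real u - real p) * b j \<le> real p"
    using Cons.IH[of "b j"] Cons.prems up by auto
  have m: "(real u - real p) * c \<le> (real u - real p) * b j"
    using pu bj by (intro mult_left_mono) auto
  show ?case
  proof (cases "j \<in> A")
    case True
    show ?thesis
    proof (cases "p = u")
      case True
      then show ?thesis using IH \<open>j \<in> A\<close> up bj by (simp add: G_Cons)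
    next
      case False
      then have "p < u" using pu by simp
      then have "real (u - 1) = real u - 1" by simp
      moreover have m2: "(real u - 1 - real p) * c \<le> (real u - 1 - real p) * b j"
        using \<open>p < u\<close> bj by (intro mult_left_mono) auto
      ultimately show ?thesis using IH \<open>j \<in> A\<close> up bj False
        by (simp add: G_Cons algebra_simps)
    qed
  next
    case False
    then show ?thesis using IH up bj m by (simp add: G_Cons algebra_simps)
  qed
qed

lemma G_mono: "A \<inter> set ks \<subseteq> B \<inter> set ks \<Longrightarrow> \<forall>i\<in>set ks. 0 < b i \<Longrightarrow>
  G b ks A \<le> G b ks B \<and> ((\<exists>i\<in>set ks. i \<in> B \<and> i \<notin> A) \<longrightarrow> G b ks A < G b ks B)"
proof (induction ks)
  case Nil then show ?case by (simp add: G_def)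
next
  case (Cons j ks)
  have h: "A \<inter> set ks \<subseteq> B \<inter> set ks" using Cons.prems by auto
  have bj: "0 < b j" using Cons.prems by auto
  have hj: "j \<in> A \<Longrightarrow> j \<in> B" using Cons.prems by auto
  show ?case using Cons.IH[OF h] Cons.prems bj hj by (auto simp: G_Cons)
qed

lemma core:
  assumes dist: "distinct ks" and sorted: "sorted_wrt (\<lambda>i j. b i \<le> b j) ks"
    and bnd: "\<forall>i\<in>set ks. 0 < b i \<and> b i \<le> 1"
    and F: "F \<subseteq> Pow (set ks)" and FG: "\<forall>A\<in>F. G b ks A = t"
    and tk: "real_of_int k - 1 < t" and k1: "k \<ge> 1"
  shows "card F \<le> length ks choose nat \<lceil>(real (length ks) + real_of_int k) / 2\<rceil>"
proof -
  define n where "n = length ks"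
  define L where "L = nat \<lceil>(real n + real_of_int k) / 2\<rceil>"
  define c where "c = \<lceil>(real n + real_of_int k) / 2\<rceil>"
  have c1: "(real n + real_of_int k) / 2 \<le> real_of_int c" unfolding c_def by (rule le_of_int_ceiling)
  have c2: "real_of_int c < (real n + real_of_int k) / 2 + 1"
    using ceiling_correct[of "(real n + real_of_int k) / 2"] unfolding c_def by linarith
  have c0: "c \<ge> 0" using k1 unfolding c_def by (simp add: ceiling_le_iff)
  have Lc: "int L = c" using c0 unfolding L_def c_def by simp
  have "real_of_int (int n + k) \<le> real_of_int (2 * c)" using c1 by simp
  then have L1: "2 * int L \<ge> int n + k" unfolding Lc by (simp only: of_int_le_iff)
  have "real_of_int (2 * c) < real_of_int (int n + k + 2)" using c2 by (simp add: field_simps)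
  then have L2: "2 * int L < int n + k + 2" unfolding Lc by (simp only: of_int_less_iff)
  have key: "\<exists>B. B \<subseteq> set ks \<and> card B = L \<and> cid ks B = cid ks A" if A: "A \<in> F" for A
  proof -
    obtain u p where up: "st ks A = (u, p)" by force
    have pu: "p \<le> u" using st_le[of ks A] up by simp
    have "G b ks A + (real u - real p) * 0 \<le> real p"
      using st_inv[OF sorted, of 0 A] bnd up by (simp add: less_imp_le)
    then have "t \<le> real p" using FG A by simp
    then have kp: "k \<le> int p" using tk by linarith
    have Asub: "A \<inter> set ks = A" using F A by auto
    have cA: "2 * card A + u = n + 2 * p" using st_card[OF dist, of A] up Asub n_def by simp
    define q where "q = nat ((2 * int L + int u - int n) div 2)"
    have ev: "even (int n + int u)" using cA by presburger
    have a1: "2 * int L \<le> int n + int u" using L2 ev kp pu by presburger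
    have a2: "int n \<le> 2 * int L + int u" using L1 k1 by linarith
    have e1: "2 * ((2 * int L + int u - int n) div 2) = 2 * int L + int u - int n"
      using ev by presburger
    have e2: "0 \<le> (2 * int L + int u - int n) div 2" using a2 by simp
    have q1: "2 * int q = 2 * int L + int u - int n"
      using e1 e2 unfolding q_def by simp
    have q2: "q \<le> u" using q1 a1 by linarith
    obtain B where B: "B \<subseteq> set ks" "cid ks B = cid ks A" "snd (st ks B) = q"
      using st_exists[OF dist, of q A] q2 up by auto
    have "fst (st ks B) = u" using st_chain[OF B(2)] up by simp
    moreover have "B \<inter> set ks = B" using B(1) by auto
    ultimately have "2 * card B + u = n + 2 * q" using st_card[OF dist, of B] B(3) n_def by simp
    then have "card B = L" using q1 by linarith
    then show ?thesis using B by auto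
  qed
  define h where "h A = (SOME B. B \<subseteq> set ks \<and> card B = L \<and> cid ks B = cid ks A)" for A
  have hA: "h A \<subseteq> set ks \<and> card (h A) = L \<and> cid ks (h A) = cid ks A" if "A \<in> F" for A
    unfolding h_def using someI_ex[OF key[OF that]] .
  have inj: "inj_on h F"
  proof (rule inj_onI)
    fix A A' assume AA: "A \<in> F" "A' \<in> F" "h A = h A'"
    then have c: "cid ks A = cid ks A'" using hA by metis
    have s: "A \<inter> set ks = A" "A' \<inter> set ks = A'" using F AA by auto
    have pos: "\<forall>i\<in>set ks. 0 < b i" using bnd by auto
    have "A \<subseteq> A' \<or> A' \<subseteq> A"
      using st_chain[OF c] st_chain[OF c[symmetric]] s by (metis nat_le_linear)
    then show "A = A'"
    proof
      assume sub: "A \<subseteq> A'"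
      show "A = A'"
      proof (rule ccontr)
        assume "A \<noteq> A'"
        then obtain i where "i \<in> A'" "i \<notin> A" using sub by auto
        moreover have "i \<in> set ks" using \<open>i \<in> A'\<close> s by auto
        ultimately have "G b ks A < G b ks A'" using G_mono[of A ks A' b] sub s pos by auto
        then show False using FG AA by simp
      qed
    next
      assume sub: "A' \<subseteq> A"
      show "A = A'"
      proof (rule ccontr)
        assume "A \<noteq> A'"
        then obtain i where "i \<in> A" "i \<notin> A'" using sub by auto
        moreover have "i \<in> set ks" using \<open>i \<in> A\<close> s by auto
        ultimately have "G b ks A' < G b ks A" using G_mono[of A' ks A b] sub s pos by auto
        then show False using FG AA by simp
      qed
    qed
  qed
  have "card F \<le> card {B. B \<subseteq> set ks \<and> card B = L}"
    by (rule card_inj_on_le[OF inj]) (use hA in auto)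
  also have "\<dots> = n choose L" using n_subsets[of "set ks" L] distinct_card[OF dist] n_def by simp
  finally show ?thesis unfolding L_def n_def .
qed

lemma exists_w:
  fixes v :: "nat \<Rightarrow> 'a::euclidean_space" and x :: 'a
  assumes "\<And>i. i < n \<Longrightarrow> v i \<noteq> 0" "x \<noteq> 0"
  shows "\<exists>w. norm w < 1 \<and> inner x w > real_of_int \<lceil>norm x\<rceil> - 1 \<and> (\<forall>i<n. inner (v i) w \<noteq> 0)"
proof -
  define k where "k = real_of_int \<lceil>norm x\<rceil>"
  define U where "U = ball 0 1 \<inter> {w. inner x w > k - 1}"
  have oU: "open U" unfolding U_def by (intro open_Int open_ball open_halfspace_gt)
  have nx: "norm x > 0" using assms by simp
  define m where "m = max 0 ((k - 1) / norm x)"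
  have "k - 1 < norm x" unfolding k_def using ceiling_correct[of "norm x"] by linarith
  then have m1: "m < 1" using nx unfolding m_def by (simp add: divide_less_eq)
  have m0: "m \<ge> 0" unfolding m_def by simp
  define r where "r = (1 + m) / 2"
  have r: "m < r" "r < 1" "0 < r" using m1 m0 unfolding r_def by auto
  define w0 where "w0 = (r / norm x) *\<^sub>R x"
  have "norm w0 = r" unfolding w0_def using nx r by simp
  moreover have "inner x w0 = r * norm x"
    unfolding w0_def using nx by (simp add: power2_norm_eq_inner[symmetric] power2_eq_square)
  moreover have "m * norm x \<ge> k - 1"
  proof -
    have "(k - 1) / norm x \<le> m" unfolding m_def by simp
    then show ?thesis using nx by (simp add: divide_le_eq)
  qed
  moreover have "m * norm x < r * norm x" using r nx by simp
  ultimately have "w0 \<in> U" using r unfolding U_def by auto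
  then have Une: "U \<noteq> {}" by auto
  define H where "H = (\<Union>i\<in>{..<n}. {w. inner (v i) w = 0})"
  have "negligible H" unfolding H_def
    by (intro negligible_Union finite_imageI) (use assms negligible_hyperplane in auto)
  then have "\<not> U \<subseteq> H" using open_not_negligible[OF oU Une] negligible_subset by blast
  then obtain w where "w \<in> U" "w \<notin> H" by auto
  then show ?thesis unfolding U_def H_def k_def by auto
qed



lemma seqs_finite: "finite (rademacher_seqs n)"
  unfolding rademacher_seqs_def by (intro finite_PiE) auto

lemma seqs_card: "card (rademacher_seqs n) = 2 ^ n"
  unfolding rademacher_seqs_def by (simp add: card_PiE numeral_2_eq_2)

lemma seqs_ne: "rademacher_seqs n \<noteq> {}"
  unfolding rademacher_seqs_def by (simp add: PiE_eq_empty_iff)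

lemma prob_rad: "measure_pmf.prob (rademacher_pmf n) E = card (rademacher_seqs n \<inter> E) / 2 ^ n"
  unfolding rademacher_pmf_def
  by (simp add: measure_pmf_of_set seqs_finite seqs_ne seqs_card)

lemma seqs_val: "\<epsilon> \<in> rademacher_seqs n \<Longrightarrow> i < n \<Longrightarrow> \<epsilon> i = -1 \<or> \<epsilon> i = 1"
  unfolding rademacher_seqs_def by auto

lemma inj_sel:
  assumes "\<And>i. i < n \<Longrightarrow> s i = -1 \<or> s i = (1::real)"
  shows "inj_on (\<lambda>\<epsilon>. {i. i < n \<and> \<epsilon> i = s i}) (rademacher_seqs n)"
proof (rule inj_onI)
  fix e e' assume e: "e \<in> rademacher_seqs n" "e' \<in> rademacher_seqs n"
    and eq: "{i. i < n \<and> e i = s i} = {i. i < n \<and> e' i = s i}"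
  show "e = e'"
  proof (rule PiE_ext[OF e[unfolded rademacher_seqs_def]])
    fix i assume "i \<in> {..<n}"
    then have i: "i < n" by simp
    have "e i = s i \<longleftrightarrow> e' i = s i" using eq i by blast
    then show "e i = e' i" using seqs_val[OF e(1) i] seqs_val[OF e(2) i] assms[OF i] by auto
  qed
qed

lemma two_L:
  fixes k :: int
  shows "2 * int (nat \<lceil>(real n + real_of_int k) / 2\<rceil>) = int n + k + delta_nk n k
    \<or> int n + k + delta_nk n k < 0"
proof -
  define a where "a = (int n + k + delta_nk n k) div 2"
  have a2: "2 * a = int n + k + delta_nk n k" unfolding a_def delta_nk_def by presburger
  have d: "delta_nk n k = 0 \<or> delta_nk n k = 1" unfolding delta_nk_def by auto
  have "real_of_int (2 * a) = real n + real_of_int k + real_of_int (delta_nk n k)"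
    using a2 by simp
  then have "\<lceil>(real n + real_of_int k) / 2\<rceil> = a"
    using d by (intro ceiling_unique) auto
  then show ?thesis using a2 by auto
qed

lemma count_R:
  fixes k :: int assumes k: "k \<ge> 1"
  shows "card (rademacher_seqs n \<inter> {\<epsilon>. (\<Sum>i<n. \<epsilon> i) = of_int (k + delta_nk n k)})
         = n choose nat \<lceil>(real n + real_of_int k) / 2\<rceil>"
proof -
  define L where "L = nat \<lceil>(real n + real_of_int k) / 2\<rceil>"
  have d: "delta_nk n k = 0 \<or> delta_nk n k = 1" unfolding delta_nk_def by auto
  have L2: "2 * int L = int n + k + delta_nk n k" using two_L[of n k] k d unfolding L_def by auto
  define one where "one \<epsilon> = {i. i < n \<and> \<epsilon> i = (1::real)}" for \<epsilon> :: "nat \<Rightarrow> real"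
  have sumf: "(\<Sum>i<n. \<epsilon> i) = 2 * real (card (one \<epsilon>)) - real n"
    if e: "\<epsilon> \<in> rademacher_seqs n" for \<epsilon>
  proof -
    have sub: "one \<epsilon> \<subseteq> {..<n}" unfolding one_def by auto
    have "(\<Sum>i<n. \<epsilon> i) = (\<Sum>i\<in>{..<n} \<inter> one \<epsilon>. \<epsilon> i) + (\<Sum>i\<in>{..<n} - one \<epsilon>. \<epsilon> i)"
      by (rule sum.Int_Diff) simp
    also have "(\<Sum>i\<in>{..<n} \<inter> one \<epsilon>. \<epsilon> i) = (\<Sum>i\<in>one \<epsilon>. 1)"
      using sub by (intro sum.cong) (auto simp: one_def)
    also have "(\<Sum>i\<in>{..<n} - one \<epsilon>. \<epsilon> i) = (\<Sum>i\<in>{..<n} - one \<epsilon>. -1)"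
      using seqs_val[OF e] by (intro sum.cong) (auto simp: one_def)
    also have "card ({..<n} - one \<epsilon>) = n - card (one \<epsilon>)"
      using sub by (simp add: card_Diff_subset finite_subset)
    moreover have "card (one \<epsilon>) \<le> n" using card_mono[OF finite_lessThan sub] by simp
    ultimately show ?thesis by (simp add: of_nat_diff)
  qed
  have ev: "\<epsilon> \<in> {\<epsilon>. (\<Sum>i<n. \<epsilon> i) = of_int (k + delta_nk n k)} \<longleftrightarrow> card (one \<epsilon>) = L"
    if e: "\<epsilon> \<in> rademacher_seqs n" for \<epsilon>
  proof -
    have "(\<Sum>i<n. \<epsilon> i) = of_int (k + delta_nk n k) \<longleftrightarrow>
          real_of_int (2 * int (card (one \<epsilon>))) = real_of_int (2 * int L)"
    proof -
      have "real_of_int (2 * int L) = real n + real_of_int k + real_of_int (delta_nk n k)"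
        using L2 by simp
      then show ?thesis using sumf[OF e] by (simp only: of_int_mult of_int_of_nat_eq of_int_add of_int_numeral) (smt (verit))
    qed
    also have "\<dots> \<longleftrightarrow> card (one \<epsilon>) = L" by (simp only: of_int_eq_iff) simp
    finally show ?thesis by simp
  qed
  have inj: "inj_on one (rademacher_seqs n)" unfolding one_def by (rule inj_sel) simp
  have img: "one ` (rademacher_seqs n \<inter> {\<epsilon>. (\<Sum>i<n. \<epsilon> i) = of_int (k + delta_nk n k)})
             = {B. B \<subseteq> {..<n} \<and> card B = L}"
  proof
    show "one ` (rademacher_seqs n \<inter> {\<epsilon>. (\<Sum>i<n. \<epsilon> i) = of_int (k + delta_nk n k)})
             \<subseteq> {B. B \<subseteq> {..<n} \<and> card B = L}"
      using ev by (auto simp: one_def)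
  next
    show "{B. B \<subseteq> {..<n} \<and> card B = L} \<subseteq>
      one ` (rademacher_seqs n \<inter> {\<epsilon>. (\<Sum>i<n. \<epsilon> i) = of_int (k + delta_nk n k)})"
    proof
      fix B assume B: "B \<in> {B. B \<subseteq> {..<n} \<and> card B = L}"
      define e :: "nat \<Rightarrow> real" where "e i = (if i < n then (if i \<in> B then 1 else -1) else undefined)" for i
      have eS: "e \<in> rademacher_seqs n" unfolding rademacher_seqs_def e_def by (auto simp: PiE_def extensional_def)
      have oe: "one e = B" using B unfolding one_def e_def by auto
      then have "e \<in> {\<epsilon>. (\<Sum>i<n. \<epsilon> i) = of_int (k + delta_nk n k)}" using ev[OF eS] B by simp
      then show "B \<in> one ` (rademacher_seqs n \<inter> {\<epsilon>. (\<Sum>i<n. \<epsilon> i) = of_int (k + delta_nk n k)})"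
        using eS oe by blast
    qed
  qed
  have "card (rademacher_seqs n \<inter> {\<epsilon>. (\<Sum>i<n. \<epsilon> i) = of_int (k + delta_nk n k)})
      = card {B. B \<subseteq> {..<n} \<and> card B = L}"
    unfolding img[symmetric] by (rule card_image[symmetric, OF inj_on_subset[OF inj]]) auto
  also have "\<dots> = n choose L" using n_subsets[of "{..<n}" L] by simp
  finally show ?thesis unfolding L_def .
qed

theorem theorem2:
  fixes n :: nat and v :: "nat \<Rightarrow> 'a::euclidean_space" and x :: 'a
  assumes "n \<ge> 1"
    and "\<And>i. i < n \<Longrightarrow> v i \<noteq> 0"
    and "\<And>i. i < n \<Longrightarrow> norm (v i) \<le> 1"
    and "x \<noteq> 0"
  shows "(measure_pmf.prob (rademacher_pmf n) {\<epsilon>. (\<Sum>i<n. \<epsilon> i *\<^sub>R v i) = x}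
           \<le> measure_pmf.prob (rademacher_pmf n)
               {\<epsilon>. (\<Sum>i<n. \<epsilon> i) = of_int (\<lceil>norm x\<rceil> + delta_nk n \<lceil>norm x\<rceil>)}
         \<and> measure_pmf.prob (rademacher_pmf n)
               {\<epsilon>. (\<Sum>i<n. \<epsilon> i) = of_int (\<lceil>norm x\<rceil> + delta_nk n \<lceil>norm x\<rceil>)}
           = real (n choose nat \<lceil>(real n + of_int \<lceil>norm x\<rceil>) / 2\<rceil>) / 2 ^ n)"
proof -
  define k where "k = \<lceil>norm x\<rceil>"
  have k1: "k \<ge> 1" unfolding k_def using assms(4) by (simp add: ceiling_le_iff[symmetric] one_le_ceiling)
  define L where "L = nat \<lceil>(real n + of_int k) / 2\<rceil>"
  obtain w where w: "norm w < 1" "inner x w > real_of_int k - 1" "\<forall>i<n. inner (v i) w \<noteq> 0"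
    using exists_w[of n v x] assms unfolding k_def by blast
  define a where "a i = inner (v i) w" for i
  define b where "b i = \<bar>a i\<bar>" for i
  define s where "s i = sgn (a i)" for i
  have a0: "a i \<noteq> 0" if "i < n" for i using w(3) that unfolding a_def by auto
  have s1: "s i = -1 \<or> s i = 1" if "i < n" for i using a0[OF that] unfolding s_def
    by (auto simp: sgn_real_def)
  have bb: "0 < b i \<and> b i \<le> 1" if "i < n" for i
  proof -
    have "\<bar>a i\<bar> \<le> norm (v i) * norm w" unfolding a_def by (rule Cauchy_Schwarz_ineq2)
    also have "\<dots> \<le> 1 * 1" using assms(3)[OF that] w(1)
      by (intro mult_mono) auto
    finally show ?thesis using a0[OF that] unfolding b_def by auto
  qed
  define ks where "ks = sort_key b [0..<n]"
  have ks: "distinct ks" "set ks = {..<n}" "length ks = n" unfolding ks_def by auto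
  have kss: "sorted_wrt (\<lambda>i j. b i \<le> b j) ks"
    using sorted_sort_key[of b "[0..<n]"] unfolding ks_def sorted_map by simp
  define Aset where "Aset \<epsilon> = {i. i < n \<and> \<epsilon> i = s i}" for \<epsilon> :: "nat \<Rightarrow> real"
  define E1 where "E1 = rademacher_seqs n \<inter> {\<epsilon>. (\<Sum>i<n. \<epsilon> i *\<^sub>R v i) = x}"
  have inj: "inj_on Aset (rademacher_seqs n)" unfolding Aset_def by (rule inj_sel) (use s1 in auto)
  have GA: "G b ks (Aset \<epsilon>) = inner x w" if e: "\<epsilon> \<in> E1" for \<epsilon>
  proof -
    have eS: "\<epsilon> \<in> rademacher_seqs n" and ex: "(\<Sum>i<n. \<epsilon> i *\<^sub>R v i) = x" using e unfolding E1_def by auto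
    have "G b ks (Aset \<epsilon>) = (\<Sum>i\<in>set ks. if i \<in> Aset \<epsilon> then b i else - b i)"
      unfolding G_def by (rule sum_list_distinct_conv_sum_set[OF ks(1)])
    also have "\<dots> = (\<Sum>i<n. \<epsilon> i * a i)"
      unfolding ks(2)
    proof (rule sum.cong)
      fix i assume "i \<in> {..<n}"
      then have i: "i < n" by simp
      show "(if i \<in> Aset \<epsilon> then b i else - b i) = \<epsilon> i * a i"
        using seqs_val[OF eS i] a0[OF i] unfolding Aset_def b_def s_def
        using i by (cases "a i > 0") (auto simp: sgn_real_def)
    qed simp
    also have "\<dots> = inner (\<Sum>i<n. \<epsilon> i *\<^sub>R v i) w"
      unfolding a_def by (simp add: inner_sum_left)
    finally show ?thesis using ex by simp
  qed
  have "card (Aset ` E1) \<le> length ks choose nat \<lceil>(real (length ks) + real_of_int k) / 2\<rceil>"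
    by (rule core[OF ks(1) kss, of "Aset ` E1" "inner x w" k])
       (use bb ks GA w(2) k1 in \<open>auto simp: Aset_def\<close>)
  moreover have "card (Aset ` E1) = card E1"
    by (rule card_image, rule inj_on_subset[OF inj]) (auto simp: E1_def)
  ultimately have cE1: "card E1 \<le> n choose L" unfolding L_def using ks(3) by simp
  have P2: "measure_pmf.prob (rademacher_pmf n)
               {\<epsilon>. (\<Sum>i<n. \<epsilon> i) = of_int (k + delta_nk n k)} = real (n choose L) / 2 ^ n"
    unfolding prob_rad count_R[OF k1] L_def ..
  have P1: "measure_pmf.prob (rademacher_pmf n) {\<epsilon>. (\<Sum>i<n. \<epsilon> i *\<^sub>R v i) = x}
     \<le> real (n choose L) / 2 ^ n"
    unfolding prob_rad E1_def[symmetric] using cE1 by (simp add: divide_right_mono)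
  show ?thesis using P1 P2 unfolding k_def L_def by simp
qed

end
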